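(* Let $n\ge 2$ and let $f:\mathbb{R}^n\to\mathbb{R}^n$ be a Laplacian map. Then, for the system $\dot x=f(x)$, the $\alpha$-limit set and the $\omega$-limit set of any trajectory consist of equilibrium points.
   Context: A real $n\times n$ matrix $L=(l_{ij})$ is a Laplacian matrix if it is symmetric and $l_{ii}=-\sum_{j\neq i} l_{ij}$ for $i=1,\dots,n$. A map $f:\mathbb{R}^n\to\mathbb{R}^n$ of class $C^1$ is a Laplacian map if its Jacobian matrix $Jf(x)$ is a Laplacian matrix for every $x\in\mathbb{R}^n$. *)

theory Defs
  imports "HOL-Analysis.Analysis"
begin

definition laplacian_matrix :: "real^'n^'n \<Rightarrow> bool" where
  "laplacian_matrix L \<longleftrightarrow> transpose L = L \<and>
     (\<forall>i. L $ i $ i = - (\<Sum>j\<in>UNIV - {i}. L $ i $ j))"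

definition laplacian_map :: "(real^'n \<Rightarrow> real^'n) \<Rightarrow> bool" where
  "laplacian_map f \<longleftrightarrow> (\<exists>f'.
     (\<forall>x. (f has_derivative f' x) (at x)) \<and>
     continuous_on UNIV (\<lambda>x. matrix (f' x)) \<and>
     (\<forall>x. laplacian_matrix (matrix (f' x))))"

definition is_trajectory :: "(real^'n \<Rightarrow> real^'n) \<Rightarrow> real set \<Rightarrow> (real \<Rightarrow> real^'n) \<Rightarrow> bool" where
  "is_trajectory f I x \<longleftrightarrow> is_interval I \<and> I \<noteq> {} \<and>
     (\<forall>t\<in>I. (x has_vector_derivative f (x t)) (at t within I))"

text \<open>omega-limit set: limits of x(t_k) with t_k in I, t_k \<rightarrow> +\<infinity>
(empty if I is bounded above); alpha-limit set: same with t_k \<rightarrow> -\<infinity>.\<close>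
definition omega_limit_set :: "real set \<Rightarrow> (real \<Rightarrow> real^'n) \<Rightarrow> (real^'n) set" where
  "omega_limit_set I x = {y. \<exists>s. (\<forall>k. s k \<in> I) \<and> filterlim s at_top sequentially \<and>
       (\<lambda>k. x (s k)) \<longlonglongrightarrow> y}"

definition alpha_limit_set :: "real set \<Rightarrow> (real \<Rightarrow> real^'n) \<Rightarrow> (real^'n) set" where
  "alpha_limit_set I x = {y. \<exists>s. (\<forall>k. s k \<in> I) \<and> filterlim s at_bot sequentially \<and>
       (\<lambda>k. x (s k)) \<longlonglongrightarrow> y}"

end

theory Submission imports Defs begin
lemma cont_mv:
  fixes M :: "'a::topological_space \<Rightarrow> real^'n^'m"
  assumes "continuous_on S M" "continuous_on S v"
  shows "continuous_on S (\<lambda>p. M p *v v p)"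
  unfolding matrix_vector_mult_def
  by (intro continuous_intros assms)

lemma potential:
  fixes f :: "real^'n \<Rightarrow> real^'n"
  assumes der: "\<And>x. (f has_derivative f' x) (at x)"
    and cont: "continuous_on UNIV (\<lambda>x. matrix (f' x))"
    and sym: "\<And>x. transpose (matrix (f' x)) = matrix (f' x)"
  shows "\<exists>V. \<forall>z. (V has_derivative (\<lambda>h. h \<bullet> f z)) (at z)"
proof -
  define A where "A z = matrix (f' z)" for z
  have bl: "bounded_linear (f' z)" for z using der by (rule has_derivative_bounded_linear)
  have fA: "f' z h = A z *v h" for z h
    using matrix_vector_mul(3)[OF bl[of z]] unfolding A_def by metis
  have fcont: "continuous_on UNIV f"
    by (intro continuous_at_imp_continuous_on ballI has_derivative_continuous[OF der])
  have Acont: "continuous_on UNIV A" using cont unfolding A_def .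
  define w where "w x s = s *\<^sub>R (A (s *\<^sub>R x) *v x) + f (s *\<^sub>R x)" for x s
  define g where "g x s = f (s *\<^sub>R x) \<bullet> x" for x s
  have wcont: "continuous_on (UNIV \<times> cbox 0 1) (\<lambda>(x, t). w x t)"
  proof -
    have c1: "continuous_on (UNIV \<times> cbox 0 1) (\<lambda>p::(real^'n) \<times> real. snd p *\<^sub>R fst p)"
      by (intro continuous_intros)
    have c2: "continuous_on (UNIV \<times> cbox 0 1) (\<lambda>p::(real^'n) \<times> real. A (snd p *\<^sub>R fst p))"
      by (rule continuous_on_compose2[OF Acont c1]) auto
    have c3: "continuous_on (UNIV \<times> cbox 0 1) (\<lambda>p::(real^'n) \<times> real. f (snd p *\<^sub>R fst p))"
      by (rule continuous_on_compose2[OF fcont c1]) auto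
    have "continuous_on (UNIV \<times> cbox 0 1) (\<lambda>p::(real^'n) \<times> real. snd p *\<^sub>R (A (snd p *\<^sub>R fst p) *v fst p) + f (snd p *\<^sub>R fst p))"
      by (intro continuous_intros cont_mv c2 c3)
    then show ?thesis unfolding w_def by (simp add: case_prod_beta)
  qed
  have fxcont: "continuous_on (UNIV \<times> cbox 0 1) (\<lambda>(x, t). blinfun_inner_left (w x t))"
  proof -
    have "continuous_on (UNIV \<times> cbox 0 1) (blinfun_inner_left \<circ> (\<lambda>(x, t). w x t))"
      by (intro continuous_on_compose wcont linear_continuous_on bounded_linear_blinfun_inner_left)
    then show ?thesis by (simp add: o_def case_prod_beta)
  qed
  have gder: "((\<lambda>x. g x t) has_derivative blinfun_apply (blinfun_inner_left (w x t))) (at x within UNIV)" for x t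
  proof -
    have d1: "((\<lambda>x. f (t *\<^sub>R x)) has_derivative (\<lambda>h. f' (t *\<^sub>R x) (t *\<^sub>R h))) (at x)"
      using has_derivative_compose[OF has_derivative_scaleR_right[OF has_derivative_ident] der]
      by (simp add: o_def)
    have "((\<lambda>x. g x t) has_derivative (\<lambda>h. f (t *\<^sub>R x) \<bullet> h + f' (t *\<^sub>R x) (t *\<^sub>R h) \<bullet> x)) (at x)"
      unfolding g_def by (rule has_derivative_inner[OF d1 has_derivative_ident])
    moreover have "f (t *\<^sub>R x) \<bullet> h + f' (t *\<^sub>R x) (t *\<^sub>R h) \<bullet> x = h \<bullet> w x t" for h
    proof -
      let ?M = "A (t *\<^sub>R x)"
      have "(?M *v h) \<bullet> x = (?M *v x) \<bullet> h"
        by (metis dot_lmul_matrix inner_commute sym A_def vector_transpose_matrix)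
      then show ?thesis
        unfolding fA w_def
        by (simp add: matrix_vector_mult_scaleR inner_add_right inner_commute)
    qed
    ultimately show ?thesis by simp
  qed
  define V where "V x = integral (cbox 0 1) (g x)" for x
  have wint: "w z integrable_on cbox 0 1" for z
  proof -
    have "continuous_on (cbox 0 1) (\<lambda>t. w z t)"
      by (rule continuous_on_compose2[OF wcont, where f="\<lambda>t. (z, t)", simplified]) 
         (auto intro!: continuous_intros)
    then show ?thesis by (rule integrable_continuous)
  qed
  have gint: "g z integrable_on cbox 0 1" for z
  proof -
    have c1: "continuous_on (cbox 0 1) (\<lambda>t::real. t *\<^sub>R z)" by (intro continuous_intros)
    have "continuous_on (cbox 0 1) (\<lambda>t. f (t *\<^sub>R z))"
      by (rule continuous_on_compose2[OF fcont c1]) auto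
    then have "continuous_on (cbox 0 1) (\<lambda>t. g z t)" unfolding g_def by (intro continuous_intros)
    then show ?thesis by (rule integrable_continuous)
  qed
  have ftc: "integral (cbox 0 1) (w z) = f z" for z
  proof -
    have "((\<lambda>s. s *\<^sub>R f (s *\<^sub>R z)) has_vector_derivative w z s) (at s within {0..1})" for s
    proof -
      have d1: "((\<lambda>s. f (s *\<^sub>R z)) has_derivative (\<lambda>h. f' (s *\<^sub>R z) (h *\<^sub>R z))) (at s)"
        using has_derivative_compose[OF has_derivative_scaleR_left[OF has_derivative_ident] der]
        by (simp add: o_def)
      have "((\<lambda>s. s *\<^sub>R f (s *\<^sub>R z)) has_derivative (\<lambda>h. s *\<^sub>R f' (s *\<^sub>R z) (h *\<^sub>R z) + h *\<^sub>R f (s *\<^sub>R z))) (at s)"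
        using has_derivative_scaleR[OF has_derivative_ident d1] by simp
      moreover have "s *\<^sub>R f' (s *\<^sub>R z) (h *\<^sub>R z) + h *\<^sub>R f (s *\<^sub>R z) = h *\<^sub>R w z s" for h
        unfolding w_def fA by (simp add: matrix_vector_mult_scaleR scaleR_add_right)
      ultimately show ?thesis
        unfolding has_vector_derivative_def by (auto intro: has_derivative_at_withinI)
    qed
    then have "(w z has_integral (1 *\<^sub>R f (1 *\<^sub>R z) - 0 *\<^sub>R f (0 *\<^sub>R z))) {0..1}"
      by (intro fundamental_theorem_of_calculus) auto
    then show ?thesis by (simp add: integral_unique)
  qed
  show ?thesis
  proof (intro exI allI)
    fix z
    have "(V has_derivative blinfun_apply (integral (cbox 0 1) (\<lambda>t. blinfun_inner_left (w z t)))) (at z within UNIV)"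
      unfolding V_def
      by (rule leibniz_rule[where fx="\<lambda>x t. blinfun_inner_left (w x t)"])
         (use gder gint fxcont in auto)
    moreover have "integral (cbox 0 1) (\<lambda>t. blinfun_inner_left (w z t)) = blinfun_inner_left (f z)"
      using integral_linear[OF wint bounded_linear_blinfun_inner_left, of z] ftc[of z]
      by (simp add: o_def)
    ultimately show "(V has_derivative (\<lambda>h. h \<bullet> f z)) (at z)" by simp
  qed
qed
lemma omega_equil:
  fixes F :: "real^'n \<Rightarrow> real^'n" and V :: "real^'n \<Rightarrow> real" and x :: "real \<Rightarrow> real^'n"
  assumes Vd: "\<And>z. (V has_derivative (\<lambda>h. h \<bullet> F z)) (at z)"
    and Fc: "continuous_on UNIV F"
    and iv: "is_interval I"
    and xd: "\<And>t. t \<in> I \<Longrightarrow> (x has_vector_derivative F (x t)) (at t within I)"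
    and sI: "\<And>k. s k \<in> I" and sinf: "filterlim s at_top sequentially"
    and sy: "(\<lambda>k. x (s k)) \<longlonglongrightarrow> y"
  shows "F y = 0"
proof (rule ccontr)
  assume Fy: "F y \<noteq> 0"
  define \<Phi> where "\<Phi> t = V (x t)" for t
  have sub: "{a..b} \<subseteq> I" if "a \<in> I" "b \<in> I" for a b
    using iv that unfolding is_interval_1 by (meson atLeastAtMost_iff subsetI)
  have intsub: "{a<..<b} \<subseteq> interior I" if "a \<in> I" "b \<in> I" for a b
    using sub[OF that] by (intro interior_maximal) auto
  have Pd: "(\<Phi> has_derivative (\<lambda>h. h * (F (x t) \<bullet> F (x t)))) (at t within I)" if "t \<in> I" for t
  proof -
    have "((\<lambda>t. V (x t)) has_derivative (\<lambda>h. (h *\<^sub>R F (x t)) \<bullet> F (x t))) (at t within I)"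
      using has_derivative_in_compose[OF xd[OF that, unfolded has_vector_derivative_def]
          has_derivative_at_withinI[OF Vd]] by (simp add: o_def)
    then show ?thesis unfolding \<Phi>_def by simp
  qed
  have xc: "continuous_on I x"
    unfolding continuous_on_eq_continuous_within using xd has_vector_derivative_continuous by blast
  have mono: "\<Phi> a \<le> \<Phi> b" if "a \<in> I" "b \<in> I" "a \<le> b" for a b
  proof (cases "a = b")
    case False
    then have "a < b" using that by auto
    from mvt_simple[OF this has_derivative_subset[OF Pd]] sub[OF that(1,2)]
    obtain \<xi> where "\<Phi> b - \<Phi> a = (b - a) * (F (x \<xi>) \<bullet> F (x \<xi>))" by force
    moreover have "0 \<le> (b - a) * (F (x \<xi>) \<bullet> F (x \<xi>))" using \<open>a < b\<close> by simp
    ultimately show ?thesis by simp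
  qed simp
  have energy: "\<Phi> b - \<Phi> a \<ge> \<delta>\<^sup>2 * (b - a)"
    if "a \<in> I" "b \<in> I" "a < b" "0 \<le> \<delta>" "\<And>u. a < u \<Longrightarrow> u < b \<Longrightarrow> \<delta> \<le> norm (F (x u))" for a b \<delta>
  proof -
    from mvt_simple[OF that(3) has_derivative_subset[OF Pd]] sub[OF that(1,2)]
    obtain \<xi> where \<xi>: "a < \<xi>" "\<xi> < b" "\<Phi> b - \<Phi> a = (b - a) * (F (x \<xi>) \<bullet> F (x \<xi>))" by force
    have "\<delta>\<^sup>2 \<le> (norm (F (x \<xi>)))\<^sup>2" using that(5)[OF \<xi>(1,2)] that(4) by (simp add: power_mono)
    then have "\<delta>\<^sup>2 \<le> F (x \<xi>) \<bullet> F (x \<xi>)" by (simp add: power2_norm_eq_inner)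
    then show ?thesis using \<xi>(3) that(3) by (simp add: mult.commute mult_left_mono)
  qed
  have movebound: "norm (x b - x a) \<le> M * (b - a)"
    if "a \<in> I" "b \<in> I" "a < b" "\<And>u. a < u \<Longrightarrow> u < b \<Longrightarrow> norm (F (x u)) \<le> M" for a b M
  proof -
    have "(x has_derivative (\<lambda>h. h *\<^sub>R F (x u))) (at u)" if "a < u" "u < b" for u
    proof -
      have "u \<in> interior I" using intsub[OF \<open>a \<in> I\<close> \<open>b \<in> I\<close>] that by auto
      then have "u \<in> I" using interior_subset by blast
      show ?thesis using xd[OF \<open>u \<in> I\<close>] at_within_interior[OF \<open>u \<in> interior I\<close>]
        unfolding has_vector_derivative_def by simp
    qed
    from mvt_general[OF that(3) continuous_on_subset[OF xc sub[OF that(1,2)]] this]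
    obtain \<xi> where \<xi>: "a < \<xi>" "\<xi> < b" "norm (x b - x a) \<le> norm ((b - a) *\<^sub>R F (x \<xi>))" by auto
    have "(b - a) * norm (F (x \<xi>)) \<le> (b - a) * M"
      using that(3) that(4)[OF \<xi>(1,2)] by (intro mult_left_mono) auto
    moreover have "\<bar>b - a\<bar> = b - a" using that(3) by simp
    ultimately show ?thesis using \<xi>(3) by (simp add: mult.commute)
  qed
  define c where "c = norm (F y)"
  have c0: "c > 0" using Fy c_def by simp
  obtain r where r0: "r > 0" and rF: "\<And>z. dist z y < r \<Longrightarrow> dist (F z) (F y) < c / 2"
  proof -
    have "isCont F y" using Fc by (simp add: continuous_on_eq_continuous_at)
    then obtain r where "r > 0" "\<forall>z. dist z y < r \<longrightarrow> dist (F z) (F y) < c / 2"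
      unfolding continuous_at_eps_delta using c0 by (meson half_gt_zero)
    then show ?thesis using that by blast
  qed
  have Flow: "c / 2 \<le> norm (F z)" and Fhigh: "norm (F z) \<le> 2 * c" if "dist z y < r" for z
    using rF[OF that] norm_triangle_ineq2[of "F z" "F y"] norm_triangle_ineq2[of "F y" "F z"]
      norm_minus_commute[of "F y" "F z"]
    unfolding c_def dist_norm by linarith+
  define \<tau> where "\<tau> = r / (8 * c)"
  have \<tau>0: "\<tau> > 0" using r0 c0 by (simp add: \<tau>_def)
  have unb: "\<exists>k. B \<le> s k" for B
    using sinf unfolding filterlim_at_top eventually_sequentially by blast
  have aI: "a + \<tau> \<in> I" if "a \<in> I" for a
  proof -
    obtain k where "a + \<tau> \<le> s k" using unb by blast
    then show ?thesis using sub[OF that sI[of k]] \<tau>0 by auto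
  qed
  have stay: "dist (x t) y < r" if "a \<in> I" "dist (x a) y < r / 2" "a \<le> t" "t \<le> a + \<tau>" for a t
  proof (rule ccontr)
    assume "\<not> dist (x t) y < r"
    define S where "S = {u \<in> {a..a + \<tau>}. r \<le> dist (x u) y}"
    have SI: "{a..a + \<tau>} \<subseteq> I" using sub[OF that(1) aI[OF that(1)]] .
    have "closed S" unfolding S_def
      by (intro continuous_on_closed_Collect_le continuous_intros continuous_on_subset[OF xc SI])
    moreover have "S \<noteq> {}" using \<open>\<not> dist (x t) y < r\<close> that(3,4) unfolding S_def by auto
    moreover have "bdd_below S" unfolding S_def by (rule bdd_belowI[of _ a]) auto
    ultimately have "Inf S \<in> S" by (rule closed_contains_Inf[rotated -1])
    define t' where "t' = Inf S"
    have t'S: "t' \<in> S" using \<open>Inf S \<in> S\<close> t'_def by simp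
    have below: "dist (x u) y < r" if "a \<le> u" "u < t'" for u
    proof (rule ccontr)
      assume "\<not> dist (x u) y < r"
      then have "u \<in> S" using that t'S unfolding S_def by auto
      then have "t' \<le> u" unfolding t'_def using \<open>bdd_below S\<close> by (rule cInf_lower)
      then show False using that by simp
    qed
    have "a \<noteq> t'" using t'S that(2) r0 unfolding S_def by auto
    then have at': "a < t'" using t'S unfolding S_def by auto
    have t'I: "t' \<in> I" using t'S SI unfolding S_def by auto
    have "norm (x t' - x a) \<le> 2 * c * (t' - a)"
      by (rule movebound[OF that(1) t'I at']) (use below Fhigh in auto)
    also have "\<dots> \<le> 2 * c * \<tau>" using t'S c0 unfolding S_def by auto
    also have "\<dots> = r / 4" using c0 by (simp add: \<tau>_def)
    finally have "dist (x t') (x a) \<le> r / 4" by (simp add: dist_norm)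
    then have "dist (x t') y < r"
      using that(2) dist_triangle[of "x t'" y "x a"] r0 by linarith
    then show False using t'S unfolding S_def by auto
  qed
  have Vc: "isCont V y" using Vd by (rule has_derivative_continuous)
  have Ps: "(\<lambda>k. \<Phi> (s k)) \<longlonglongrightarrow> V y"
    unfolding \<Phi>_def using isCont_tendsto_compose[OF Vc sy] .
  have Pbound: "\<Phi> t \<le> V y" if "t \<in> I" for t
  proof (rule LIMSEQ_le_const[OF Ps])
    obtain N where "\<forall>k\<ge>N. t \<le> s k"
      using sinf unfolding filterlim_at_top eventually_sequentially by blast
    then show "\<exists>N. \<forall>k\<ge>N. \<Phi> t \<le> \<Phi> (s k)" using mono[OF that sI] by blast
  qed
  define \<epsilon> where "\<epsilon> = (c / 2)\<^sup>2 * \<tau>"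
  have e0: "\<epsilon> > 0" using c0 \<tau>0 by (simp add: \<epsilon>_def)
  have ev1: "eventually (\<lambda>k. dist (x (s k)) y < r / 2) sequentially"
    using sy r0 unfolding tendsto_iff by (meson half_gt_zero)
  have ev2: "eventually (\<lambda>k. dist (\<Phi> (s k)) (V y) < \<epsilon>) sequentially"
    using Ps e0 unfolding tendsto_iff by blast
  obtain k where k1: "dist (x (s k)) y < r / 2" and k2: "dist (\<Phi> (s k)) (V y) < \<epsilon>"
    using eventually_happens[OF eventually_conj[OF ev1 ev2]] by auto
  let ?a = "s k"
  have "\<Phi> (?a + \<tau>) - \<Phi> ?a \<ge> (c / 2)\<^sup>2 * (?a + \<tau> - ?a)"
    by (rule energy[OF sI aI[OF sI]]) (use \<tau>0 c0 stay[OF sI k1] Flow in auto)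
  then have "\<Phi> (?a + \<tau>) - \<Phi> ?a \<ge> \<epsilon>" by (simp add: \<epsilon>_def)
  moreover have "\<Phi> (?a + \<tau>) \<le> V y" using Pbound aI sI by blast
  ultimately show False using k2 by (simp add: dist_real_def)
qed
theorem lemma5p1:
  fixes f :: "real^'n \<Rightarrow> real^'n" and x :: "real \<Rightarrow> real^'n" and I :: "real set"
  assumes "CARD('n) \<ge> 2"
    and "laplacian_map f"
    and "is_trajectory f I x"
  shows "(\<forall>y\<in>alpha_limit_set I x. f y = 0) \<and> (\<forall>y\<in>omega_limit_set I x. f y = 0)"
proof -
  obtain f' where der: "\<And>z. (f has_derivative f' z) (at z)"
    and cont: "continuous_on UNIV (\<lambda>z. matrix (f' z))"
    and lap: "\<And>z. laplacian_matrix (matrix (f' z))"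
    using assms(2) unfolding laplacian_map_def by blast
  have sym: "\<And>z. transpose (matrix (f' z)) = matrix (f' z)"
    using lap unfolding laplacian_matrix_def by blast
  obtain V where Vd: "\<And>z. (V has_derivative (\<lambda>h. h \<bullet> f z)) (at z)"
    using potential[OF der cont sym] by blast
  have fc: "continuous_on UNIV f"
    by (intro continuous_at_imp_continuous_on ballI has_derivative_continuous[OF der])
  have iv: "is_interval I" and xd: "\<And>t. t \<in> I \<Longrightarrow> (x has_vector_derivative f (x t)) (at t within I)"
    using assms(3) unfolding is_trajectory_def by auto
  have om: "\<forall>y\<in>omega_limit_set I x. f y = 0"
  proof
    fix y assume "y \<in> omega_limit_set I x"
    then obtain s where s1: "\<And>k. s k \<in> I" and s2: "filterlim s at_top sequentially"
      and s3: "(\<lambda>k. x (s k)) \<longlonglongrightarrow> y"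
      unfolding omega_limit_set_def by blast
    show "f y = 0" by (rule omega_equil[OF Vd fc iv xd s1 s2 s3]) assumption
  qed
  have al: "\<forall>y\<in>alpha_limit_set I x. f y = 0"
  proof
    fix y assume "y \<in> alpha_limit_set I x"
    then obtain s where sI: "\<And>k. s k \<in> I" and sb: "filterlim s at_bot sequentially"
      and sy: "(\<lambda>k. x (s k)) \<longlonglongrightarrow> y"
      unfolding alpha_limit_set_def by blast
    have Vd': "((\<lambda>z. - V z) has_derivative (\<lambda>h. h \<bullet> (- f z))) (at z)" for z
      using has_derivative_minus[OF Vd[of z]] by simp
    have fc': "continuous_on UNIV (\<lambda>z. - f z)" using fc by (intro continuous_intros)
    have iv': "is_interval (uminus ` I)"
      using is_interval_neg_translationI[OF iv, of 0] by simp
    have xd': "((\<lambda>t. x (- t)) has_vector_derivative - f (x (- t))) (at t within uminus ` I)"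
      if "t \<in> uminus ` I" for t
    proof -
      have m: "(uminus has_vector_derivative (-1)) (at t within uminus ` I)"
        unfolding has_vector_derivative_def
        using has_derivative_minus[OF has_derivative_ident, of "at t within uminus ` I"] by simp
      have "- t \<in> I" using that by auto
      moreover have "uminus ` uminus ` I = I" by (simp add: image_image)
      ultimately have "(x has_vector_derivative f (x (- t))) (at (- t) within uminus ` uminus ` I)"
        using xd by simp
      from vector_diff_chain_within[OF m this] show ?thesis by (simp add: o_def)
    qed
    have sI': "- s k \<in> uminus ` I" for k using sI by auto
    have st: "filterlim (\<lambda>k. - s k) at_top sequentially"
      using sb by (simp add: filterlim_uminus_at_top)
    have "- f y = 0"
      by (rule omega_equil[where F="\<lambda>z. - f z", OF Vd' fc' iv' xd' sI' st]) (use sy in simp_all)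
    then show "f y = 0" by simp
  qed
  show ?thesis using al om by blast
qed

end
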